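(* Let $K$ be a compact line, $(F_i)_{i\in I}$ a weak*-null family in $\mathrm{NBV}(K)$ with $\mu_i$ the measure associated to $F_i$, $J$ a convex subset of $K$ and $S$ a finite subset of $J$. If $J$ has more than one point then $\sum_{t\in S}|F_i(t)|\le|\mu_i|(J)\mod c_0(I)$, and if $J$ is open then $\sum_{t\in S}|F_i(t)|\le\tfrac12|\mu_i|(J)\mod c_0(I)$.
   Context: A compact line is a totally ordered set which is compact in its order topology. $J\subseteq K$ is convex if $t\le s$ in $J$ implies $[t,s]\subseteq J$. $\mathrm{NBV}(K)$ is the space of right-continuous real maps of bounded variation on $K$; each finite signed regular Borel measure $\mu$ on $K$ corresponds isometrically to $F_\mu(t)=\mu([\min K,t])$, and the measure associated to $F$ is the $\mu$ with $F_\mu=F$; $|\mu|$ is its total variation measure. $c_0(I)$ is the set of real families with $\{i:|a_i|\ge\varepsilon\}$ finite for all $\varepsilon>0$ (written $\lim_{i\in I}a_i=0$). $(F_i)$ is weak*-null if $\lim_i\int_Kf\,d\mu_i=0$ for all $f\in C(K)$. "$x_i\le y_i\mod c_0(I)$" means $\{i:x_i\ge y_i+\varepsilon\}$ is finite for every $\varepsilon>0$. *)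

theory Defs
  imports "HOL-Analysis.Analysis"
begin

text \<open>The compact line K is modelled as a type 'a of class linorder_topology with
  compact UNIV; then min K exists and [min K, t] = {..t}.\<close>

definition ord_convex :: "'a::linorder set \<Rightarrow> bool" where
  "ord_convex J \<longleftrightarrow> (\<forall>t\<in>J. \<forall>s\<in>J. t \<le> s \<longrightarrow> {t..s} \<subseteq> J)"

definition right_continuous :: "('a::linorder_topology \<Rightarrow> real) \<Rightarrow> bool" where
  "right_continuous F \<longleftrightarrow> (\<forall>t. continuous (at_right t) F)"

definition bounded_variation :: "('a::linorder \<Rightarrow> real) \<Rightarrow> bool" where
  "bounded_variation F \<longleftrightarrow> (\<exists>B. \<forall>(n::nat) (t::nat \<Rightarrow> 'a).
      (\<forall>k<n. t k \<le> t (Suc k)) \<longrightarrow> (\<Sum>k<n. \<bar>F (t (Suc k)) - F (t k)\<bar>) \<le> B)"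

definition NBV :: "('a::linorder_topology \<Rightarrow> real) set" where
  "NBV = {F. right_continuous F \<and> bounded_variation F}"

definition regular_borel_measure :: "'a::topological_space measure \<Rightarrow> bool" where
  "regular_borel_measure M \<longleftrightarrow> finite_measure M \<and> sets M = sets borel \<and>
     (\<forall>B\<in>sets M.
        measure M B = (SUP C\<in>{C. compact C \<and> C \<subseteq> B}. measure M C) \<and>
        measure M B = (INF U\<in>{U. open U \<and> B \<subseteq> U}. measure M U))"

text \<open>A finite signed regular Borel measure mu is represented by its Jordan
  decomposition (mu+, mu-): two finite regular Borel measures that are mutually singular.\<close>
type_synonym 'a smeasure = "'a measure \<times> 'a measure"

definition signed_regular_measure :: "'a::topological_space smeasure \<Rightarrow> bool" where
  "signed_regular_measure \<mu> \<longleftrightarrow> regular_borel_measure (fst \<mu>) \<and> regular_borel_measure (snd \<mu>) \<and>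
     (\<exists>A\<in>sets borel. measure (fst \<mu>) (- A) = 0 \<and> measure (snd \<mu>) A = 0)"

definition smeasure_of :: "'a smeasure \<Rightarrow> 'a set \<Rightarrow> real" where
  "smeasure_of \<mu> B = measure (fst \<mu>) B - measure (snd \<mu>) B"

definition total_variation :: "'a smeasure \<Rightarrow> 'a set \<Rightarrow> real" where
  "total_variation \<mu> B = measure (fst \<mu>) B + measure (snd \<mu>) B"

definition sintegral :: "'a smeasure \<Rightarrow> ('a \<Rightarrow> real) \<Rightarrow> real" where
  "sintegral \<mu> f = integral\<^sup>L (fst \<mu>) f - integral\<^sup>L (snd \<mu>) f"

definition associated_measure :: "('a::linorder_topology \<Rightarrow> real) \<Rightarrow> 'a smeasure \<Rightarrow> bool" where
  "associated_measure F \<mu> \<longleftrightarrow> signed_regular_measure \<mu> \<and> (\<forall>t. F t = smeasure_of \<mu> {..t})"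

definition c0_null :: "'i set \<Rightarrow> ('i \<Rightarrow> real) \<Rightarrow> bool" where
  "c0_null I a \<longleftrightarrow> (\<forall>\<epsilon>>0. finite {i\<in>I. \<bar>a i\<bar> \<ge> \<epsilon>})"

definition le_mod_c0 :: "'i set \<Rightarrow> ('i \<Rightarrow> real) \<Rightarrow> ('i \<Rightarrow> real) \<Rightarrow> bool" where
  "le_mod_c0 I x y \<longleftrightarrow> (\<forall>\<epsilon>>0. finite {i\<in>I. x i \<ge> y i + \<epsilon>})"

definition weak_star_null :: "'i set \<Rightarrow> ('i \<Rightarrow> 'a::topological_space smeasure) \<Rightarrow> bool" where
  "weak_star_null I \<mu> \<longleftrightarrow> (\<forall>f::'a \<Rightarrow> real. continuous_on UNIV f \<longrightarrow> c0_null I (\<lambda>i. sintegral (\<mu> i) f))"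

end

theory Submission
  imports Defs "HOL-Analysis.Analysis"
begin

lemma urysohn_K:
  fixes C U :: "'a::linorder_topology set"
  assumes K: "compact (UNIV::'a set)" and C: "closed C" and U: "open U" and CU: "C \<subseteq> U"
  obtains f :: "'a \<Rightarrow> real" where "continuous_on UNIV f" "\<And>x. 0 \<le> f x" "\<And>x. f x \<le> 1"
    "\<And>x. x \<in> C \<Longrightarrow> f x = 1" "\<And>x. x \<notin> U \<Longrightarrow> f x = 0"
proof -
  have H: "Hausdorff_space (euclidean :: 'a topology)"
    unfolding Hausdorff_space_def using hausdorff by (fastforce simp: disjnt_def)
  have N: "normal_space (euclidean :: 'a topology)"
    using compact_Hausdorff_or_regular_imp_normal_space[of "euclidean :: 'a topology"] H K by (simp add: compact_space_def)
  obtain f where f: "continuous_map euclidean (top_of_set {0..1::real}) f" "f ` (- U) \<subseteq> {0}" "f ` C \<subseteq> {1}"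
    using Urysohn_lemma[OF N, of "-U" C 0 1] C U CU by (auto simp: disjnt_def closed_Compl)
  have "continuous_on UNIV f" "\<And>x. f x \<in> {0..1}"
    using f(1) unfolding continuous_map_in_subtopology by auto
  show ?thesis
  proof (rule that)
    show "continuous_on UNIV f" by fact
    fix x
    show "0 \<le> f x" "f x \<le> 1" using \<open>\<And>x. f x \<in> {0..1}\<close>[of x] by auto
    show "x \<in> C \<Longrightarrow> f x = 1" using f(3) by blast
    show "x \<notin> U \<Longrightarrow> f x = 0" using f(2) by blast
  qed
qed

lemma fin_est:
  fixes M :: "'a::topological_space measure"
  assumes M: "finite_measure M" "sets M = sets borel" and f: "continuous_on UNIV f"
    and f01: "\<And>x. 0 \<le> f x" "\<And>x. f x \<le> (1::real)"
    and fC: "\<And>x. x \<in> C \<Longrightarrow> f x = 1" and fU: "\<And>x. x \<notin> U \<Longrightarrow> f x = 0"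
    and CX: "C \<subseteq> X" and X: "X \<in> sets borel" and Z: "Z \<in> sets borel" and UZ: "(U \<union> X) - C \<subseteq> Z"
  shows "\<bar>measure M X - integral\<^sup>L M f\<bar> \<le> measure M Z"
proof -
  interpret finite_measure M by fact
  have sp: "space M = UNIV" using sets_eq_imp_space_eq[OF M(2)] by simp
  have fm: "f \<in> borel_measurable M"
    using borel_measurable_continuous_onI[OF f] measurable_cong_sets[OF M(2) refl] by blast
  have fi: "integrable M f"
    by (rule integrable_const_bound[where B=1]) (use f01 fm in auto)
  have Xs: "X \<in> sets M" and Zs: "Z \<in> sets M" using X Z M(2) by auto
  have Xi: "integrable M (indicator X :: 'a \<Rightarrow> real)" using Xs sp by (simp add: integrable_indicator_iff less_top[symmetric])
  have Zi: "integrable M (indicator Z :: 'a \<Rightarrow> real)" using Zs sp by (simp add: integrable_indicator_iff less_top[symmetric])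
  have eq: "measure M X - integral\<^sup>L M f = integral\<^sup>L M (\<lambda>x. indicator X x - f x)"
    using Xi fi sp by simp
  have bd: "\<And>x. norm (indicator X x - f x) \<le> (indicator Z x :: real)"
  proof -
    fix x
    show "norm (indicator X x - f x) \<le> (indicator Z x :: real)"
      using f01[of x] fC[of x] fU[of x] CX UZ by (auto simp: indicator_def)
  qed
  have "\<bar>integral\<^sup>L M (\<lambda>x. indicator X x - f x)\<bar> \<le> integral\<^sup>L M (\<lambda>x. norm (indicator X x - f x))"
    using integral_norm_bound by (metis real_norm_def)
  also have "\<dots> \<le> integral\<^sup>L M (indicator Z)"
    by (rule integral_mono) (use Xi fi Zi bd in auto)
  also have "\<dots> = measure M Z" using sp by simp
  finally show ?thesis using eq by simp
qed

lemma c0_le: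
  assumes "c0_null I a" "\<And>i. i \<in> I \<Longrightarrow> x i \<le> \<bar>a i\<bar> + y i"
  shows "le_mod_c0 I x y"
  unfolding le_mod_c0_def
proof (intro allI impI)
  fix e :: real assume e: "e > 0"
  have "{i\<in>I. x i \<ge> y i + e} \<subseteq> {i\<in>I. \<bar>a i\<bar> \<ge> e}" using assms(2) by force
  then show "finite {i\<in>I. x i \<ge> y i + e}"
    using assms(1) e unfolding c0_null_def by (meson finite_subset)
qed


lemma srm_parts:
  assumes "signed_regular_measure \<mu>"
  shows "finite_measure (fst \<mu>)" "sets (fst \<mu>) = sets borel"
    "finite_measure (snd \<mu>)" "sets (snd \<mu>) = sets borel"
  using assms unfolding signed_regular_measure_def regular_borel_measure_def by auto

lemma tv_nonneg: "total_variation \<mu> A \<ge> 0"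
  unfolding total_variation_def by simp

lemma tv_mono:
  assumes "signed_regular_measure \<mu>" "A \<subseteq> B" "B \<in> sets borel"
  shows "total_variation \<mu> A \<le> total_variation \<mu> B"
proof -
  note p = srm_parts[OF assms(1)]
  have "measure (fst \<mu>) A \<le> measure (fst \<mu>) B"
    using finite_measure.finite_measure_mono[OF p(1) assms(2)] p(2) assms(3) by auto
  moreover have "measure (snd \<mu>) A \<le> measure (snd \<mu>) B"
    using finite_measure.finite_measure_mono[OF p(3) assms(2)] p(4) assms(3) by auto
  ultimately show ?thesis unfolding total_variation_def by simp
qed

lemma tv_add:
  assumes "signed_regular_measure \<mu>" "A \<in> sets borel" "B \<in> sets borel" "A \<inter> B = {}"
  shows "total_variation \<mu> (A \<union> B) = total_variation \<mu> A + total_variation \<mu> B"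
proof -
  note p = srm_parts[OF assms(1)]
  have "measure (fst \<mu>) (A \<union> B) = measure (fst \<mu>) A + measure (fst \<mu>) B"
    using finite_measure.finite_measure_Union[OF p(1)] p(2) assms(2-4) by auto
  moreover have "measure (snd \<mu>) (A \<union> B) = measure (snd \<mu>) A + measure (snd \<mu>) B"
    using finite_measure.finite_measure_Union[OF p(3)] p(4) assms(2-4) by auto
  ultimately show ?thesis unfolding total_variation_def by simp
qed

lemma est:
  fixes \<mu> :: "'i \<Rightarrow> 'a::linorder_topology smeasure"
  assumes K: "compact (UNIV :: 'a set)" and A: "\<forall>i\<in>I. signed_regular_measure (\<mu> i)"
    and W: "weak_star_null I \<mu>"
    and C: "closed C" and U: "open U" and CU: "C \<subseteq> U" and CX: "C \<subseteq> X"
    and X: "X \<in> sets borel" and Z: "Z \<in> sets borel" and UZ: "(U \<union> X) - C \<subseteq> Z"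
  shows "le_mod_c0 I (\<lambda>i. \<bar>smeasure_of (\<mu> i) X\<bar>) (\<lambda>i. total_variation (\<mu> i) Z)"
proof -
  obtain f :: "'a \<Rightarrow> real" where f: "continuous_on UNIV f" "\<And>x. 0 \<le> f x" "\<And>x. f x \<le> 1"
    "\<And>x. x \<in> C \<Longrightarrow> f x = 1" "\<And>x. x \<notin> U \<Longrightarrow> f x = 0"
    using urysohn_K[OF K C U CU] by blast
  have c0: "c0_null I (\<lambda>i. sintegral (\<mu> i) f)" using W f(1) unfolding weak_star_null_def by blast
  show ?thesis
  proof (rule c0_le[OF c0])
    fix i assume "i \<in> I"
    then have s: "signed_regular_measure (\<mu> i)" using A by blast
    note p = srm_parts[OF s]
    have 1: "\<bar>measure (fst (\<mu> i)) X - integral\<^sup>L (fst (\<mu> i)) f\<bar> \<le> measure (fst (\<mu> i)) Z"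
      by (rule fin_est[OF p(1,2) f CX X Z UZ])
    have 2: "\<bar>measure (snd (\<mu> i)) X - integral\<^sup>L (snd (\<mu> i)) f\<bar> \<le> measure (snd (\<mu> i)) Z"
      by (rule fin_est[OF p(3,4) f CX X Z UZ])
    show "\<bar>smeasure_of (\<mu> i) X\<bar> \<le> \<bar>sintegral (\<mu> i) f\<bar> + total_variation (\<mu> i) Z"
      using 1 2 unfolding smeasure_of_def sintegral_def total_variation_def by linarith
  qed
qed

lemma le_add:
  assumes "le_mod_c0 I x y" "le_mod_c0 I x' y'"
  shows "le_mod_c0 I (\<lambda>i. x i + x' i) (\<lambda>i. y i + y' i)"
  unfolding le_mod_c0_def
proof (intro allI impI)
  fix e :: real assume e: "e > 0"
  have "{i\<in>I. x i + x' i \<ge> y i + y' i + e} \<subseteq> {i\<in>I. x i \<ge> y i + e/2} \<union> {i\<in>I. x' i \<ge> y' i + e/2}"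
    by auto
  moreover have "finite ({i\<in>I. x i \<ge> y i + e/2} \<union> {i\<in>I. x' i \<ge> y' i + e/2})"
    using assms e unfolding le_mod_c0_def by simp
  ultimately show "finite {i\<in>I. x i + x' i \<ge> y i + y' i + e}" by (rule finite_subset)
qed

lemma le_trans_pw:
  assumes "le_mod_c0 I x y" "\<And>i. i \<in> I \<Longrightarrow> y i \<le> z i"
  shows "le_mod_c0 I x z"
  unfolding le_mod_c0_def
proof (intro allI impI)
  fix e :: real assume e: "e > 0"
  have "{i\<in>I. x i \<ge> z i + e} \<subseteq> {i\<in>I. x i \<ge> y i + e}" using assms(2) by force
  then show "finite {i\<in>I. x i \<ge> z i + e}" using assms(1) e unfolding le_mod_c0_def
    by (meson finite_subset)
qed

lemma le_pw:
  assumes "\<And>i. i \<in> I \<Longrightarrow> x i \<le> y i"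
  shows "le_mod_c0 I x y"
  unfolding le_mod_c0_def
proof (intro allI impI)
  fix e :: real assume e: "e > 0"
  have "{i\<in>I. x i \<ge> y i + e} = {}" using assms e by force
  then show "finite {i\<in>I. x i \<ge> y i + e}" by (metis finite.emptyI)
qed

lemma le_half:
  assumes "le_mod_c0 I x y1" "le_mod_c0 I x y2"
  shows "le_mod_c0 I x (\<lambda>i. (y1 i + y2 i) / 2)"
  unfolding le_mod_c0_def
proof (intro allI impI)
  fix e :: real assume e: "e > 0"
  have "{i\<in>I. x i \<ge> (y1 i + y2 i) / 2 + e} \<subseteq> {i\<in>I. x i \<ge> y1 i + e} \<union> {i\<in>I. x i \<ge> y2 i + e}"
  proof
    fix i assume "i \<in> {i\<in>I. x i \<ge> (y1 i + y2 i) / 2 + e}"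
    then have "i \<in> I" "x i \<ge> (y1 i + y2 i) / 2 + e" by auto
    moreover from this(2) have "x i \<ge> y1 i + e \<or> x i \<ge> y2 i + e" by argo
    ultimately
    show "i \<in> {i\<in>I. x i \<ge> y1 i + e} \<union> {i\<in>I. x i \<ge> y2 i + e}" by auto
  qed
  moreover have "finite ({i\<in>I. x i \<ge> y1 i + e} \<union> {i\<in>I. x i \<ge> y2 i + e})"
    using assms e unfolding le_mod_c0_def by simp
  ultimately show "finite {i\<in>I. x i \<ge> (y1 i + y2 i) / 2 + e}" by (rule finite_subset)
qed


lemma downset_borel:
  fixes D :: "'a::linorder_topology set"
  assumes "\<And>x y. x \<in> D \<Longrightarrow> y \<le> x \<Longrightarrow> y \<in> D"
  shows "D \<in> sets borel"
proof (cases "\<exists>g\<in>D. \<forall>x\<in>D. x \<le> g")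
  case True
  then obtain g where g: "g \<in> D" "\<forall>x\<in>D. x \<le> g" by blast
  have "D = {..g}"
  proof
    show "D \<subseteq> {..g}" using g by auto
    show "{..g} \<subseteq> D" using g(1) assms by blast
  qed
  then show ?thesis by simp
next
  case False
  have "D = (\<Union>x\<in>D. {..<x})"
  proof
    show "D \<subseteq> (\<Union>x\<in>D. {..<x})"
    proof
      fix x assume "x \<in> D"
      then obtain x' where "x' \<in> D" "\<not> x' \<le> x" using False by blast
      then show "x \<in> (\<Union>x\<in>D. {..<x})" by (auto simp: not_le)
    qed
    show "(\<Union>x\<in>D. {..<x}) \<subseteq> D"
    proof
      fix y assume "y \<in> (\<Union>x\<in>D. {..<x})"
      then obtain x where "x \<in> D" "y < x" by auto
      then show "y \<in> D" using assms[of x y] by simp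
    qed
  qed
  moreover have "open (\<Union>x\<in>D. {..<x})" by (intro open_UN) simp
  ultimately have "open D" by simp
  then show ?thesis by simp
qed

lemma convex_borel:
  fixes J :: "'a::linorder_topology set"
  assumes "ord_convex J"
  shows "J \<in> sets borel"
proof -
  let ?L = "{x. \<forall>j\<in>J. x < j}" and ?R = "{x. \<exists>j\<in>J. x \<le> j}"
  have L: "?L \<in> sets borel"
  proof (rule downset_borel)
    fix x y assume "x \<in> ?L" "(y::'a) \<le> x"
    then show "y \<in> ?L" by (simp add: le_less_trans)
  qed
  have R: "?R \<in> sets borel"
  proof (rule downset_borel)
    fix x y assume "x \<in> ?R" "(y::'a) \<le> x"
    then show "y \<in> ?R" using order.trans by blast
  qed
  have "J = (UNIV - ?L) \<inter> ?R"
  proof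
    show "J \<subseteq> (UNIV - ?L) \<inter> ?R" by auto
    show "(UNIV - ?L) \<inter> ?R \<subseteq> J"
    proof
      fix x assume "x \<in> (UNIV - ?L) \<inter> ?R"
      then obtain j1 j2 where "j1 \<in> J" "j2 \<in> J" "j1 \<le> x" "x \<le> j2" by (auto simp: not_less)
      then have "{j1..j2} \<subseteq> J" "x \<in> {j1..j2}" using assms unfolding ord_convex_def by auto
      then show "x \<in> J" by blast
    qed
  qed
  also have "\<dots> \<in> sets borel" using L R by (intro sets.Int sets.Diff) auto
  finally show ?thesis .
qed
lemma tv_le2:
  assumes "signed_regular_measure \<mu>" "X1 \<in> sets borel" "X2 \<in> sets borel" "B \<in> sets borel"
    "X1 \<inter> X2 = {}" "X1 \<union> X2 \<subseteq> B"
  shows "total_variation \<mu> X1 + total_variation \<mu> X2 \<le> total_variation \<mu> B"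
  using tv_add[OF assms(1-3,5)] tv_mono[OF assms(1,6,4)] by simp

lemma tv_le3:
  assumes "signed_regular_measure \<mu>" "X1 \<in> sets borel" "X2 \<in> sets borel" "X3 \<in> sets borel"
    "B \<in> sets borel"
    "X1 \<inter> X2 = {}" "X1 \<inter> X3 = {}" "X2 \<inter> X3 = {}" "X1 \<union> X2 \<union> X3 \<subseteq> B"
  shows "total_variation \<mu> X1 + total_variation \<mu> X2 + total_variation \<mu> X3 \<le> total_variation \<mu> B"
proof -
  have "total_variation \<mu> (X1 \<union> X2) = total_variation \<mu> X1 + total_variation \<mu> X2"
    using tv_add[OF assms(1-3,6)] .
  moreover have "total_variation \<mu> (X1 \<union> X2) + total_variation \<mu> X3 \<le> total_variation \<mu> B"
    by (rule tv_le2) (use assms in auto)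
  ultimately show ?thesis by simp
qed

context
  fixes I :: "'i set" and \<mu> :: "'i \<Rightarrow> 'a::linorder_topology smeasure"
  assumes K: "compact (UNIV :: 'a set)" and Asr: "\<forall>i\<in>I. signed_regular_measure (\<mu> i)"
    and W: "weak_star_null I \<mu>"
begin

lemma estZ:
  assumes "closed C" "open U" "C \<subseteq> U" "C \<subseteq> X" "X \<in> sets borel" "Y \<in> sets borel"
    "(U \<union> X) - C \<subseteq> Y" "Y \<subseteq> Z" "Z \<in> sets borel"
  shows "le_mod_c0 I (\<lambda>i. \<bar>smeasure_of (\<mu> i) X\<bar>) (\<lambda>i. total_variation (\<mu> i) Z)"
  by (rule le_trans_pw[OF est[OF K Asr W assms(1-7)]], rule tv_mono[OF bspec[OF Asr] assms(8,9)], assumption)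

lemma estR:
  assumes "t < s" "{t<..<s} \<subseteq> Z" "Z \<in> sets borel"
  shows "le_mod_c0 I (\<lambda>i. \<bar>smeasure_of (\<mu> i) {..t}\<bar>) (\<lambda>i. total_variation (\<mu> i) Z)"
proof (rule estZ[of "{..t}" "{..<s}" "{..t}" "{t<..<s}"])
  show "{..t} \<subseteq> {..<s}" using assms(1) by auto
  show "{..<s} \<union> {..t} - {..t} \<subseteq> {t<..<s}" by auto
qed (use assms in simp_all)

lemma estR':
  assumes "\<And>y. y \<le> t" "Z \<in> sets borel"
  shows "le_mod_c0 I (\<lambda>i. \<bar>smeasure_of (\<mu> i) {..t}\<bar>) (\<lambda>i. total_variation (\<mu> i) Z)"
proof -
  have sub: "UNIV \<union> {..t} - {..t} \<subseteq> {}"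
  proof
    fix x assume "x \<in> UNIV \<union> {..t} - {..t}"
    then have "\<not> x \<le> t" by simp
    then show "x \<in> {}" using assms(1) by blast
  qed
  show ?thesis by (rule estZ[OF _ _ _ _ _ _ sub _ assms(2)]) auto
qed

lemma estL:
  assumes "a < t" "{a<..t} \<subseteq> Z" "Z \<in> sets borel"
  shows "le_mod_c0 I (\<lambda>i. \<bar>smeasure_of (\<mu> i) {..t}\<bar>) (\<lambda>i. total_variation (\<mu> i) Z)"
proof (rule estZ[of "{..a}" "{..<t}" "{..t}" "{a<..t}"])
  show "{..a} \<subseteq> {..<t}" using assms(1) by auto
  show "{..a} \<subseteq> {..t}" using assms(1) by auto
  show "{..<t} \<union> {..t} - {..a} \<subseteq> {a<..t}" by auto
qed (use assms in simp_all)

lemma estL':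
  assumes "{..t} \<subseteq> Z" "Z \<in> sets borel"
  shows "le_mod_c0 I (\<lambda>i. \<bar>smeasure_of (\<mu> i) {..t}\<bar>) (\<lambda>i. total_variation (\<mu> i) Z)"
  by (rule estZ[of "{}" "{}" "{..t}" "{..t}"]) (use assms in simp_all)

end



lemma le_cong:
  assumes "le_mod_c0 I x' y" "\<And>i. i \<in> I \<Longrightarrow> x i = x' i"
  shows "le_mod_c0 I x y"
proof -
  have "\<And>e. {i\<in>I. x i \<ge> y i + e} = {i\<in>I. x' i \<ge> y i + e}" using assms(2) by auto
  then show ?thesis using assms(1) unfolding le_mod_c0_def by simp
qed

lemma sum_insert_fun:
  assumes "finite A" "b \<notin> A"
  shows "(\<lambda>i. \<Sum>t\<in>insert b A. g i t) = (\<lambda>i. g i b + (\<Sum>t\<in>A. g i t))"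
  using assms by simp

context
  fixes I :: "'i set" and \<mu> :: "'i \<Rightarrow> 'a::linorder_topology smeasure"
  assumes K: "compact (UNIV :: 'a set)" and Asr: "\<forall>i\<in>I. signed_regular_measure (\<mu> i)"
    and W: "weak_star_null I \<mu>"
begin

lemma left_split:
  assumes J: "ord_convex J" and fin: "finite A'" "A' \<noteq> {}" and lt: "\<forall>a\<in>A'. a < b"
    and AJ: "A' \<subseteq> J" and bJ: "b \<in> J"
  obtains v where "v \<le> b" "\<forall>a\<in>A'. a < v" "v \<in> J"
    "le_mod_c0 I (\<lambda>i. \<bar>smeasure_of (\<mu> i) {..b}\<bar>) (\<lambda>i. total_variation (\<mu> i) (J \<inter> {v..b}))"
proof -
  have JB: "J \<in> sets borel" by (rule convex_borel[OF J])
  define p where "p = Max A'"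
  have pA: "p \<in> A'" using fin p_def by simp
  have pmax: "\<forall>a\<in>A'. a \<le> p" using fin p_def by simp
  have pb: "p < b" using pA lt by blast
  have pJ: "p \<in> J" using pA AJ by blast
  have pbJ: "{p..b} \<subseteq> J" using J pJ bJ pb unfolding ord_convex_def by simp
  show ?thesis
  proof (cases "\<exists>v. p < v \<and> v < b")
    case True
    then obtain v where v: "p < v" "v < b" by blast
    show ?thesis
    proof (rule that)
      show "v \<le> b" using v by simp
      show "\<forall>a\<in>A'. a < v" using pmax v by (meson le_less_trans)
      show "v \<in> J" using pbJ v by (meson atLeastAtMost_iff less_imp_le subsetD)
      show "le_mod_c0 I (\<lambda>i. \<bar>smeasure_of (\<mu> i) {..b}\<bar>) (\<lambda>i. total_variation (\<mu> i) (J \<inter> {v..b}))"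
      proof (rule estL[OF K Asr W v(2)])
        show "{v<..b} \<subseteq> J \<inter> {v..b}"
        proof
          fix x assume x: "x \<in> {v<..b}"
          then have "x \<in> {p..b}" using v by auto
          then show "x \<in> J \<inter> {v..b}" using pbJ x by auto
        qed
        show "J \<inter> {v..b} \<in> sets borel" using JB by simp
      qed
    qed
  next
    case False
    show ?thesis
    proof (rule that)
      show "b \<le> b" by simp
      show "\<forall>a\<in>A'. a < b" by fact
      show "b \<in> J" by fact
      show "le_mod_c0 I (\<lambda>i. \<bar>smeasure_of (\<mu> i) {..b}\<bar>) (\<lambda>i. total_variation (\<mu> i) (J \<inter> {b..b}))"
      proof (rule estL[OF K Asr W pb])
        show "{p<..b} \<subseteq> J \<inter> {b..b}"
        proof
          fix x assume x: "x \<in> {p<..b}"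
          then have "x = b" using False by (metis greaterThanAtMost_iff order_le_less)
          then show "x \<in> J \<inter> {b..b}" using bJ by simp
        qed
        show "J \<inter> {b..b} \<in> sets borel" using JB by simp
      qed
    qed
  qed
qed

lemma part1_aux:
  assumes J: "ord_convex J" and fin: "finite S"
  shows "\<forall>w. w \<in> J \<longrightarrow> (\<forall>t\<in>S. t < w) \<longrightarrow> S \<subseteq> J \<longrightarrow>
    le_mod_c0 I (\<lambda>i. \<Sum>t\<in>S. \<bar>smeasure_of (\<mu> i) {..t}\<bar>) (\<lambda>i. total_variation (\<mu> i) (J \<inter> {..<w}))"
  using fin
proof (induction S rule: finite_linorder_max_induct)
  case empty
  show ?case by (auto intro!: le_pw simp: tv_nonneg)
next
  case (insert b A')
  have JB: "J \<in> sets borel" by (rule convex_borel[OF J])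
  show ?case
  proof (intro allI impI)
    fix w assume wJ: "w \<in> J" and lt: "\<forall>t\<in>insert b A'. t < w" and sub: "insert b A' \<subseteq> J"
    have bJ: "b \<in> J" and AJ: "A' \<subseteq> J" using sub by auto
    have bw: "b < w" using lt by auto
    have bA: "b \<notin> A'" using insert.hyps(2) by auto
    have IH: "le_mod_c0 I (\<lambda>i. \<Sum>t\<in>A'. \<bar>smeasure_of (\<mu> i) {..t}\<bar>) (\<lambda>i. total_variation (\<mu> i) (J \<inter> {..<b}))"
      using insert.IH bJ AJ insert.hyps(2) by blast
    have Rb: "le_mod_c0 I (\<lambda>i. \<bar>smeasure_of (\<mu> i) {..b}\<bar>) (\<lambda>i. total_variation (\<mu> i) (J \<inter> {b..<w}))"
    proof (rule estR[OF K Asr W bw])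
      have "{b..w} \<subseteq> J" using J bJ wJ bw unfolding ord_convex_def by simp
      show "{b<..<w} \<subseteq> J \<inter> {b..<w}"
      proof
        fix x assume x: "x \<in> {b<..<w}"
        then have "x \<in> {b..w}" by (simp add: less_imp_le)
        then have "x \<in> J" using \<open>{b..w} \<subseteq> J\<close> by (rule subsetD[rotated])
        moreover have "x \<in> {b..<w}" using x by (simp add: less_imp_le)
        ultimately show "x \<in> J \<inter> {b..<w}" by (rule IntI)
      qed
      show "J \<inter> {b..<w} \<in> sets borel" using JB by simp
    qed
    have sum: "le_mod_c0 I (\<lambda>i. \<bar>smeasure_of (\<mu> i) {..b}\<bar> + (\<Sum>t\<in>A'. \<bar>smeasure_of (\<mu> i) {..t}\<bar>))
       (\<lambda>i. total_variation (\<mu> i) (J \<inter> {b..<w}) + total_variation (\<mu> i) (J \<inter> {..<b}))"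
      by (rule le_add[OF Rb IH])
    have "le_mod_c0 I (\<lambda>i. \<bar>smeasure_of (\<mu> i) {..b}\<bar> + (\<Sum>t\<in>A'. \<bar>smeasure_of (\<mu> i) {..t}\<bar>))
       (\<lambda>i. total_variation (\<mu> i) (J \<inter> {..<w}))"
    proof (rule le_trans_pw[OF sum])
      fix i assume "i \<in> I"
      then have sr: "signed_regular_measure (\<mu> i)" using Asr by blast
      show "total_variation (\<mu> i) (J \<inter> {b..<w}) + total_variation (\<mu> i) (J \<inter> {..<b})
            \<le> total_variation (\<mu> i) (J \<inter> {..<w})"
        by (rule tv_le2[OF sr]) (use JB bw in auto)
    qed
    then show "le_mod_c0 I (\<lambda>i. \<Sum>t\<in>insert b A'. \<bar>smeasure_of (\<mu> i) {..t}\<bar>)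
       (\<lambda>i. total_variation (\<mu> i) (J \<inter> {..<w}))"
      using sum_insert_fun[OF insert.hyps(1) bA, of "\<lambda>i t. \<bar>smeasure_of (\<mu> i) {..t}\<bar>"] by simp
  qed
qed

lemma part1:
  assumes J: "ord_convex J" and fin: "finite S" and SJ: "S \<subseteq> J" and two: "\<exists>t\<in>J. \<exists>s\<in>J. t \<noteq> s"
  shows "le_mod_c0 I (\<lambda>i. \<Sum>t\<in>S. \<bar>smeasure_of (\<mu> i) {..t}\<bar>) (\<lambda>i. total_variation (\<mu> i) J)"
proof -
  have JB: "J \<in> sets borel" by (rule convex_borel[OF J])
  show ?thesis
  proof (cases "S = {}")
    case True
    then show ?thesis by (auto intro!: le_pw simp: tv_nonneg)
  next
    case Sne: False
    define m where "m = Max S"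
    have mS: "m \<in> S" using fin Sne m_def by simp
    have mmax: "\<forall>t\<in>S. t \<le> m" using fin m_def by simp
    have mJ: "m \<in> J" using mS SJ by blast
    show ?thesis
    proof (cases "\<exists>w\<in>J. m < w")
      case True
      then obtain w where w: "w \<in> J" "m < w" by blast
      have "\<forall>t\<in>S. t < w" using mmax w(2) by (meson le_less_trans)
      then have "le_mod_c0 I (\<lambda>i. \<Sum>t\<in>S. \<bar>smeasure_of (\<mu> i) {..t}\<bar>) (\<lambda>i. total_variation (\<mu> i) (J \<inter> {..<w}))"
        using part1_aux[OF J fin] w(1) SJ by blast
      then show ?thesis
      proof (rule le_trans_pw)
        fix i assume "i \<in> I"
        then have sr: "signed_regular_measure (\<mu> i)" using Asr by blast
        show "total_variation (\<mu> i) (J \<inter> {..<w}) \<le> total_variation (\<mu> i) J"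
          by (rule tv_mono[OF sr _ JB]) auto
      qed
    next
    case noabove: False
      define A' where "A' = S - {m}"
      have SA: "S = insert m A'" using mS A'_def by auto
      have finA: "finite A'" using fin A'_def by simp
      have mA: "m \<notin> A'" using A'_def by simp
      have Alt: "\<forall>a\<in>A'. a < m" using mmax A'_def by force
      have AJ: "A' \<subseteq> J" using SJ A'_def by auto
      have eq: "(\<lambda>i. \<Sum>t\<in>S. \<bar>smeasure_of (\<mu> i) {..t}\<bar>) =
          (\<lambda>i. \<bar>smeasure_of (\<mu> i) {..m}\<bar> + (\<Sum>t\<in>A'. \<bar>smeasure_of (\<mu> i) {..t}\<bar>))"
        unfolding SA using sum_insert_fun[OF finA mA, of "\<lambda>i t. \<bar>smeasure_of (\<mu> i) {..t}\<bar>"] by simp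
      show ?thesis
      proof (cases "A' = {}")
        case True
        obtain a where a: "a \<in> J" "a \<noteq> m" using two by blast
        have am: "a < m" using a noabove by (meson linorder_neqE)
        have "le_mod_c0 I (\<lambda>i. \<bar>smeasure_of (\<mu> i) {..m}\<bar>) (\<lambda>i. total_variation (\<mu> i) J)"
        proof (rule estL[OF K Asr W am _ JB])
          have "{a..m} \<subseteq> J" using J a(1) mJ am unfolding ord_convex_def by simp
          then show "{a<..m} \<subseteq> J" by (auto simp: subset_eq)
        qed
        then show ?thesis unfolding eq using True by simp
      next
        case False
        obtain v where v: "v \<le> m" "\<forall>a\<in>A'. a < v" "v \<in> J"
          and L: "le_mod_c0 I (\<lambda>i. \<bar>smeasure_of (\<mu> i) {..m}\<bar>) (\<lambda>i. total_variation (\<mu> i) (J \<inter> {v..m}))"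
          using left_split[OF J finA False Alt AJ mJ] by blast
        have IH: "le_mod_c0 I (\<lambda>i. \<Sum>t\<in>A'. \<bar>smeasure_of (\<mu> i) {..t}\<bar>) (\<lambda>i. total_variation (\<mu> i) (J \<inter> {..<v}))"
          using part1_aux[OF J finA] v AJ by blast
        have sum: "le_mod_c0 I (\<lambda>i. \<bar>smeasure_of (\<mu> i) {..m}\<bar> + (\<Sum>t\<in>A'. \<bar>smeasure_of (\<mu> i) {..t}\<bar>))
          (\<lambda>i. total_variation (\<mu> i) (J \<inter> {v..m}) + total_variation (\<mu> i) (J \<inter> {..<v}))"
          by (rule le_add[OF L IH])
        have "le_mod_c0 I (\<lambda>i. \<bar>smeasure_of (\<mu> i) {..m}\<bar> + (\<Sum>t\<in>A'. \<bar>smeasure_of (\<mu> i) {..t}\<bar>))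
          (\<lambda>i. total_variation (\<mu> i) J)"
        proof (rule le_trans_pw[OF sum])
          fix i assume "i \<in> I"
          then have sr: "signed_regular_measure (\<mu> i)" using Asr by blast
          show "total_variation (\<mu> i) (J \<inter> {v..m}) + total_variation (\<mu> i) (J \<inter> {..<v})
                \<le> total_variation (\<mu> i) J"
            by (rule tv_le2[OF sr]) (use JB in auto)
        qed
        then show ?thesis unfolding eq .
      qed
    qed
  qed
qed

lemma right_est:
  assumes "open G" "b \<in> G" "G \<in> sets borel"
  obtains R where "R \<in> sets borel" "R \<subseteq> G" "R \<subseteq> {b<..}"
    "le_mod_c0 I (\<lambda>i. \<bar>smeasure_of (\<mu> i) {..b}\<bar>) (\<lambda>i. total_variation (\<mu> i) R)"
proof (cases "\<exists>y. b < y")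
  case True
  then obtain y where "b < y" by blast
  then obtain s where s: "s > b" "{b..<s} \<subseteq> G" using open_right[OF assms(1,2)] by blast
  show ?thesis
  proof (rule that[of "{b<..<s}"])
    show "{b<..<s} \<in> sets borel" by simp
    show "{b<..<s} \<subseteq> G" using s(2) by (auto simp: subset_eq less_imp_le)
    show "{b<..<s} \<subseteq> {b<..}" by auto
    show "le_mod_c0 I (\<lambda>i. \<bar>smeasure_of (\<mu> i) {..b}\<bar>) (\<lambda>i. total_variation (\<mu> i) {b<..<s})"
      by (rule estR[OF K Asr W s(1)]) auto
  qed
next
  case False
  then have "\<And>y. y \<le> b" by (simp add: not_less)
  show ?thesis
  proof (rule that[of "{}"])
    show "le_mod_c0 I (\<lambda>i. \<bar>smeasure_of (\<mu> i) {..b}\<bar>) (\<lambda>i. total_variation (\<mu> i) {})"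
      by (rule estR'[OF K Asr W \<open>\<And>y. y \<le> b\<close>]) simp
  qed auto
qed

lemma part2_aux:
  assumes J: "ord_convex J" and oJ: "open J" and fin: "finite S"
  shows "\<forall>D. open D \<longrightarrow> (\<forall>x y. x \<in> D \<longrightarrow> y \<le> x \<longrightarrow> y \<in> D) \<longrightarrow> S \<subseteq> J \<inter> D \<longrightarrow>
    le_mod_c0 I (\<lambda>i. \<Sum>t\<in>S. \<bar>smeasure_of (\<mu> i) {..t}\<bar>) (\<lambda>i. total_variation (\<mu> i) (J \<inter> D) / 2)"
  using fin
proof (induction S rule: finite_linorder_max_induct)
  case empty
  show ?case by (auto intro!: le_pw simp: tv_nonneg)
next
  case (insert b A')
  have JB: "J \<in> sets borel" using oJ by simp
  show ?case
  proof (intro allI impI)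
    fix D :: "'a set" assume oD: "open D" and dD: "\<forall>x y. x \<in> D \<longrightarrow> y \<le> x \<longrightarrow> y \<in> D"
      and sub: "insert b A' \<subseteq> J \<inter> D"
    have DB: "D \<in> sets borel" using oD by simp
    have bJ: "b \<in> J" and bD: "b \<in> D" and AJ: "A' \<subseteq> J" and AD: "A' \<subseteq> D" using sub by auto
    have bA: "b \<notin> A'" using insert.hyps(2) by auto
    have eq: "(\<lambda>i. \<Sum>t\<in>insert b A'. \<bar>smeasure_of (\<mu> i) {..t}\<bar>) =
          (\<lambda>i. \<bar>smeasure_of (\<mu> i) {..b}\<bar> + (\<Sum>t\<in>A'. \<bar>smeasure_of (\<mu> i) {..t}\<bar>))"
      using sum_insert_fun[OF insert.hyps(1) bA, of "\<lambda>i t. \<bar>smeasure_of (\<mu> i) {..t}\<bar>"] by simp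
    have belowD: "{..b} \<subseteq> D" using dD bD by auto
    obtain R where R: "R \<in> sets borel" "R \<subseteq> J \<inter> D" "R \<subseteq> {b<..}"
      and Rest: "le_mod_c0 I (\<lambda>i. \<bar>smeasure_of (\<mu> i) {..b}\<bar>) (\<lambda>i. total_variation (\<mu> i) R)"
      using right_est[of "J \<inter> D" b] oJ oD bJ bD JB DB by blast
    show "le_mod_c0 I (\<lambda>i. \<Sum>t\<in>insert b A'. \<bar>smeasure_of (\<mu> i) {..t}\<bar>)
        (\<lambda>i. total_variation (\<mu> i) (J \<inter> D) / 2)"
    proof (cases "A' = {}")
      case True
      obtain L where L: "L \<in> sets borel" "L \<subseteq> J \<inter> D" "L \<subseteq> {..b}"
        and Lest: "le_mod_c0 I (\<lambda>i. \<bar>smeasure_of (\<mu> i) {..b}\<bar>) (\<lambda>i. total_variation (\<mu> i) L)"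
      proof (cases "\<exists>y. y < b")
        case True
        then obtain y where "y < b" by blast
        then obtain a where a: "a < b" "{a<..b} \<subseteq> J" using open_left[OF oJ bJ] by blast
        show ?thesis
        proof (rule that[of "{a<..b}"])
          show "{a<..b} \<subseteq> J \<inter> D" using a(2) belowD by auto
          show "le_mod_c0 I (\<lambda>i. \<bar>smeasure_of (\<mu> i) {..b}\<bar>) (\<lambda>i. total_variation (\<mu> i) {a<..b})"
            by (rule estL[OF K Asr W a(1)]) auto
        qed auto
      next
        case False
        then have e: "{..b} = {b}" by (auto simp: not_less intro: antisym)
        show ?thesis
        proof (rule that[of "{..b}"])
          show "{..b} \<subseteq> J \<inter> D" using e bJ bD by auto
          show "le_mod_c0 I (\<lambda>i. \<bar>smeasure_of (\<mu> i) {..b}\<bar>) (\<lambda>i. total_variation (\<mu> i) {..b})"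
            by (rule estL'[OF K Asr W]) auto
        qed auto
      qed
      have h: "le_mod_c0 I (\<lambda>i. \<bar>smeasure_of (\<mu> i) {..b}\<bar>)
          (\<lambda>i. (total_variation (\<mu> i) L + total_variation (\<mu> i) R) / 2)"
        by (rule le_half[OF Lest Rest])
      have "le_mod_c0 I (\<lambda>i. \<bar>smeasure_of (\<mu> i) {..b}\<bar>) (\<lambda>i. total_variation (\<mu> i) (J \<inter> D) / 2)"
      proof (rule le_trans_pw[OF h])
        fix i assume "i \<in> I"
        then have sr: "signed_regular_measure (\<mu> i)" using Asr by blast
        have "total_variation (\<mu> i) L + total_variation (\<mu> i) R \<le> total_variation (\<mu> i) (J \<inter> D)"
        proof (rule tv_le2[OF sr L(1) R(1)])
          show "L \<inter> R = {}" using L(3) R(3) by fastforce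
        qed (use L R JB DB in auto)
        then show "(total_variation (\<mu> i) L + total_variation (\<mu> i) R) / 2 \<le> total_variation (\<mu> i) (J \<inter> D) / 2"
          by simp
      qed
      then show ?thesis unfolding eq using True by simp
    next
      case False
      have Alt: "\<forall>a\<in>A'. a < b" using insert.hyps(2) by blast
      obtain v where v: "v \<le> b" "\<forall>a\<in>A'. a < v" "v \<in> J"
        and Lest: "le_mod_c0 I (\<lambda>i. \<bar>smeasure_of (\<mu> i) {..b}\<bar>) (\<lambda>i. total_variation (\<mu> i) (J \<inter> {v..b}))"
        using left_split[OF J insert.hyps(1) False Alt AJ bJ] by blast
      have IH: "le_mod_c0 I (\<lambda>i. \<Sum>t\<in>A'. \<bar>smeasure_of (\<mu> i) {..t}\<bar>) (\<lambda>i. total_variation (\<mu> i) (J \<inter> {..<v}) / 2)"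
      proof -
        have "open {..<v}" by simp
        moreover have "\<forall>x y. x \<in> {..<v} \<longrightarrow> y \<le> x \<longrightarrow> y \<in> {..<v}" by auto
        moreover have "A' \<subseteq> J \<inter> {..<v}" using AJ v(2) by auto
        ultimately show ?thesis using insert.IH by blast
      qed
      have h: "le_mod_c0 I (\<lambda>i. \<bar>smeasure_of (\<mu> i) {..b}\<bar>)
          (\<lambda>i. (total_variation (\<mu> i) (J \<inter> {v..b}) + total_variation (\<mu> i) R) / 2)"
        by (rule le_half[OF Lest Rest])
      have sum: "le_mod_c0 I (\<lambda>i. \<bar>smeasure_of (\<mu> i) {..b}\<bar> + (\<Sum>t\<in>A'. \<bar>smeasure_of (\<mu> i) {..t}\<bar>))
          (\<lambda>i. (total_variation (\<mu> i) (J \<inter> {v..b}) + total_variation (\<mu> i) R) / 2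
               + total_variation (\<mu> i) (J \<inter> {..<v}) / 2)"
        by (rule le_add[OF h IH])
      have "le_mod_c0 I (\<lambda>i. \<bar>smeasure_of (\<mu> i) {..b}\<bar> + (\<Sum>t\<in>A'. \<bar>smeasure_of (\<mu> i) {..t}\<bar>))
          (\<lambda>i. total_variation (\<mu> i) (J \<inter> D) / 2)"
      proof (rule le_trans_pw[OF sum])
        fix i assume "i \<in> I"
        then have sr: "signed_regular_measure (\<mu> i)" using Asr by blast
        have s1: "J \<inter> {..<v} \<subseteq> J \<inter> D" using belowD v(1) by auto
        have s2: "J \<inter> {v..b} \<subseteq> J \<inter> D" using belowD by auto
        have "total_variation (\<mu> i) (J \<inter> {..<v}) + total_variation (\<mu> i) (J \<inter> {v..b})
              + total_variation (\<mu> i) R \<le> total_variation (\<mu> i) (J \<inter> D)"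
        proof (rule tv_le3[OF sr _ _ R(1)])
          show "J \<inter> {..<v} \<inter> R = {}" using R(3) v(1) by auto
          show "J \<inter> {v..b} \<inter> R = {}" using R(3) by fastforce
          show "J \<inter> {..<v} \<union> J \<inter> {v..b} \<union> R \<subseteq> J \<inter> D" using s1 s2 R(2) by blast
        qed (use JB DB in auto)
        then show "(total_variation (\<mu> i) (J \<inter> {v..b}) + total_variation (\<mu> i) R) / 2
               + total_variation (\<mu> i) (J \<inter> {..<v}) / 2 \<le> total_variation (\<mu> i) (J \<inter> D) / 2"
          by argo
      qed
      then show ?thesis unfolding eq .
    qed
  qed
qed

end

theorem proposition2p14:
  fixes I :: "'i set" and F :: "'i \<Rightarrow> 'a::linorder_topology \<Rightarrow> real"
    and \<mu> :: "'i \<Rightarrow> 'a smeasure" and J S :: "'a set"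
  assumes "compact (UNIV :: 'a set)"
    and "\<forall>i\<in>I. F i \<in> NBV"
    and "\<forall>i\<in>I. associated_measure (F i) (\<mu> i)"
    and "weak_star_null I \<mu>"
    and "ord_convex J"
    and "finite S" and "S \<subseteq> J"
  shows "((\<exists>t\<in>J. \<exists>s\<in>J. t \<noteq> s) \<longrightarrow>
            le_mod_c0 I (\<lambda>i. \<Sum>t\<in>S. \<bar>F i t\<bar>) (\<lambda>i. total_variation (\<mu> i) J))
       \<and> (open J \<longrightarrow>
            le_mod_c0 I (\<lambda>i. \<Sum>t\<in>S. \<bar>F i t\<bar>) (\<lambda>i. total_variation (\<mu> i) J / 2))"
proof -
  have Asr: "\<forall>i\<in>I. signed_regular_measure (\<mu> i)"
    using assms(3) unfolding associated_measure_def by blast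
  have Feq: "(\<Sum>t\<in>S. \<bar>F i t\<bar>) = (\<Sum>t\<in>S. \<bar>smeasure_of (\<mu> i) {..t}\<bar>)" if "i \<in> I" for i
  proof -
    have "\<forall>t. F i t = smeasure_of (\<mu> i) {..t}"
      using assms(3) that unfolding associated_measure_def by blast
    then show ?thesis by simp
  qed
  show ?thesis
  proof (intro conjI impI)
    assume two: "\<exists>t\<in>J. \<exists>s\<in>J. t \<noteq> s"
    show "le_mod_c0 I (\<lambda>i. \<Sum>t\<in>S. \<bar>F i t\<bar>) (\<lambda>i. total_variation (\<mu> i) J)"
      by (rule le_cong[OF part1[OF assms(1) Asr assms(4) assms(5,6,7) two] Feq])
  next
    assume oJ: "open J"
    have "le_mod_c0 I (\<lambda>i. \<Sum>t\<in>S. \<bar>smeasure_of (\<mu> i) {..t}\<bar>) (\<lambda>i. total_variation (\<mu> i) (J \<inter> UNIV) / 2)"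
      using part2_aux[OF assms(1) Asr assms(4) assms(5) oJ assms(6)] assms(7) by auto
    then have "le_mod_c0 I (\<lambda>i. \<Sum>t\<in>S. \<bar>smeasure_of (\<mu> i) {..t}\<bar>) (\<lambda>i. total_variation (\<mu> i) J / 2)"
      by simp
    then show "le_mod_c0 I (\<lambda>i. \<Sum>t\<in>S. \<bar>F i t\<bar>) (\<lambda>i. total_variation (\<mu> i) J / 2)"
      by (rule le_cong) (rule Feq)
  qed
qed

end
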